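(* Let $d\ge1$, $\alpha\in(0,2)$, $\mu\in(0,\min\{\alpha,1\})$, $\lambda>0$, $\delta_i\in(0,1)$, and let $\omega_i=\omega_\lambda^{\delta_i,\mu}$. Define, for $\xi>0$, \[ A_{\alpha,i}(\xi):=c_\alpha\,\mathrm{p.v.}\int_{\mathbb{R}^d}\frac{\omega_i(|\xi e_1-z|)-\omega_i(\xi)}{|z|^{d+\alpha}}\,dz . \] Then there is a constant $C_2>0$ depending only on $\alpha$, $d$ and $\mu$ such that for every $\xi>0$, \[ A_{\alpha,i}(\xi)\le\begin{cases} C_2\,\delta_i\,\lambda^{-\mu}\xi^{\mu-\alpha}, & 0<\xi\le\lambda,\\ C_2\,\delta_i\,\xi^{-\alpha}, & \xi\ge\lambda.\end{cases} \]
   Context: $e_1=(1,0,\dots,0)\in\mathbb{R}^d$. $c_\alpha=\frac{2^\alpha\Gamma(\frac{d+\alpha}{2})}{\pi^{d/2}|\Gamma(-\frac\alpha2)|}>0$ is the normalizing constant of the fractional Laplacian. For $\delta>0$, $\mu\in(0,1)$, $\lambda>0$, the modulus of continuity $\omega_\lambda^{\delta,\mu}:(0,\infty)\to(0,\infty)$ is \[ \omega_\lambda^{\delta,\mu}(\xi)=\begin{cases}\delta\lambda^{-1}\xi-\frac14\delta\lambda^{-1-\mu}\xi^{1+\mu}, & 0<\xi\le\lambda,\\ \frac34\delta+\frac12\delta\log\frac\xi\lambda, & \xi>\lambda.\end{cases} \] *)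

theory Defs
  imports "HOL-Analysis.Analysis"
begin

definition frac_const :: "nat \<Rightarrow> real \<Rightarrow> real" where
  "frac_const d \<alpha> = 2 powr \<alpha> * Gamma ((real d + \<alpha>) / 2) /
      (pi powr (real d / 2) * \<bar>Gamma (- \<alpha> / 2)\<bar>)"

definition omega_mod :: "real \<Rightarrow> real \<Rightarrow> real \<Rightarrow> real \<Rightarrow> real" where
  "omega_mod \<delta> \<mu> lam \<xi> =
     (if \<xi> \<le> lam then \<delta> / lam * \<xi> - 1/4 * \<delta> * lam powr (-1 - \<mu>) * \<xi> powr (1 + \<mu>)
      else 3/4 * \<delta> + 1/2 * \<delta> * ln (\<xi> / lam))"

definition A_trunc :: "real \<Rightarrow> real \<Rightarrow> real \<Rightarrow> real \<Rightarrow> 'a::euclidean_space \<Rightarrow> real \<Rightarrow> real \<Rightarrow> real" where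
  "A_trunc \<alpha> \<delta> \<mu> lam e \<xi> \<epsilon> =
     frac_const DIM('a) \<alpha> *
     (LINT z : {z::'a. norm z > \<epsilon>} | lborel.
        (omega_mod \<delta> \<mu> lam (norm (\<xi> *\<^sub>R e - z)) - omega_mod \<delta> \<mu> lam \<xi>)
          / norm z powr (real DIM('a) + \<alpha>))"

text \<open>Principal value A_{alpha}(xi), taken as the limsup of the truncated integrals
  as eps -> 0+ (in the extended reals; equals the p.v. whenever the latter exists).\<close>
definition A_pv :: "real \<Rightarrow> real \<Rightarrow> real \<Rightarrow> real \<Rightarrow> 'a::euclidean_space \<Rightarrow> real \<Rightarrow> ereal" where
  "A_pv \<alpha> \<delta> \<mu> lam e \<xi> = Limsup (at_right 0) (\<lambda>\<epsilon>. ereal (A_trunc \<alpha> \<delta> \<mu> lam e \<xi> \<epsilon>))"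

end

theory Submission
  imports Defs "HOL-Analysis.Analysis"
begin

lemma pow_tangent:
  fixes x m p :: real
  assumes "0 \<le> x" "0 < m" "1 \<le> p"
  shows "m powr p + p * m powr (p - 1) * (x - m) \<le> x powr p"
proof (cases "x = 0")
  case True
  have "m powr (p - 1) * m = m powr p" using assms by (simp add: powr_diff)
  then show ?thesis using True assms
    using mult_left_mono[of 1 p "m powr p"] by (simp add: algebra_simps)
next
  case False
  then have x: "x > 0" using assms by simp
  have "x powr p - m powr p \<ge> (p * m powr (p - 1)) * (x - m)"
    apply (rule convex_on_imp_above_tangent[where A="{0<..}"])
    using assms x powr_convex[OF assms(3)]
    by (auto simp: interior_open intro!: has_field_derivative_at_within has_real_derivative_powr)
  then show ?thesis by simp
qed

definition Dw :: "real \<Rightarrow> real \<Rightarrow> real \<Rightarrow> real \<Rightarrow> real" where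
  "Dw \<delta> \<mu> lam m = (if m \<le> lam then \<delta> / lam - (1 + \<mu>) / 4 * \<delta> * lam powr (-1 - \<mu>) * m powr \<mu>
     else \<delta> / (2 * m))"

lemma aux_lin:
  fixes c A p B x m X d :: real
  assumes "c * (A + p * B * (x - m)) \<le> c * X"
  shows "d * x - c * X \<le> d * m - c * A + (d - p * c * B) * (x - m)"
  using assms by (simp add: algebra_simps)

lemma g_tangent:
  fixes x m lam \<delta> \<mu> :: real
  assumes "0 \<le> x" "0 < m" "0 < lam" "0 < \<delta>" "0 < \<mu>"
  shows "\<delta> / lam * x - 1/4 * \<delta> * lam powr (-1 - \<mu>) * x powr (1 + \<mu>) \<le>
    (\<delta> / lam * m - 1/4 * \<delta> * lam powr (-1 - \<mu>) * m powr (1 + \<mu>))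
    + (\<delta> / lam - (1 + \<mu>) / 4 * \<delta> * lam powr (-1 - \<mu>) * m powr \<mu>) * (x - m)"
proof -
  have h: "m powr (1+\<mu>) + (1+\<mu>) * m powr \<mu> * (x - m) \<le> x powr (1+\<mu>)"
    using pow_tangent[of x m "1+\<mu>"] assms by simp
  have c: "0 \<le> 1/4 * \<delta> * lam powr (-1 - \<mu>)" using assms by simp
  have "1/4 * \<delta> * lam powr (-1 - \<mu>) * (m powr (1+\<mu>) + (1+\<mu>) * m powr \<mu> * (x - m))
     \<le> 1/4 * \<delta> * lam powr (-1 - \<mu>) * x powr (1+\<mu>)"
    using mult_left_mono[OF h c] .
  from aux_lin[OF this, of "\<delta> / lam"] show ?thesis by (simp add: mult.assoc mult.left_commute)
qed

lemma lam_facts: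
  fixes lam \<delta> \<mu> :: real
  assumes "0 < lam" "0 < \<delta>" "0 < \<mu>" "\<mu> \<le> 1"
  shows "\<delta> / lam * lam - 1/4 * \<delta> * lam powr (-1 - \<mu>) * lam powr (1 + \<mu>) = 3/4 * \<delta>"
    and "\<delta> / lam - (1 + \<mu>) / 4 * \<delta> * lam powr (-1 - \<mu>) * lam powr \<mu> \<ge> \<delta> / (2 * lam)"
proof -
  have "lam powr (-1 - \<mu>) * lam powr (1 + \<mu>) = 1" using assms by (simp add: powr_add[symmetric])
  then show "\<delta> / lam * lam - 1/4 * \<delta> * lam powr (-1 - \<mu>) * lam powr (1 + \<mu>) = 3/4 * \<delta>"
    using assms by (simp add: field_simps)
  have e: "lam powr (-1 - \<mu>) * lam powr \<mu> = 1 / lam" using assms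
    by (simp add: powr_add[symmetric] powr_minus_divide)
  have "\<delta> / lam - (1 + \<mu>) / 4 * \<delta> * lam powr (-1 - \<mu>) * lam powr \<mu> = \<delta> / lam * (1 - (1+\<mu>)/4)"
    using e assms by (simp add: field_simps)
  also have "\<dots> \<ge> \<delta> / lam * (1/2)" using assms by (intro mult_left_mono) auto
  finally show "\<delta> / lam - (1 + \<mu>) / 4 * \<delta> * lam powr (-1 - \<mu>) * lam powr \<mu> \<ge> \<delta> / (2 * lam)"
    by simp
qed

lemma L_tangent:
  fixes x m lam \<delta> :: real
  assumes "0 < x" "0 < m" "0 < lam" "0 < \<delta>"
  shows "3/4 * \<delta> + 1/2 * \<delta> * ln (x / lam) \<le> 3/4 * \<delta> + 1/2 * \<delta> * ln (m / lam) + \<delta> / (2 * m) * (x - m)"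
proof -
  have "ln (x / m) \<le> x / m - 1" using assms by (intro ln_le_minus_one) auto
  moreover have "ln (x / lam) = ln (x / m) + ln (m / lam)" using assms by (simp add: ln_div)
  ultimately have "ln (x / lam) \<le> ln (m / lam) + (x - m) / m" using assms by (simp add: field_simps)
  then have "1/2 * \<delta> * ln (x / lam) \<le> 1/2 * \<delta> * (ln (m / lam) + (x - m) / m)"
    using assms by (intro mult_left_mono) auto
  then show ?thesis using assms by (simp add: field_simps)
qed

lemma omega_tangent:
  fixes x m lam \<delta> \<mu> :: real
  assumes x: "0 \<le> x" and m: "0 < m" and l: "0 < lam" and d: "0 < \<delta>" and mu: "0 < \<mu>" "\<mu> \<le> 1"
  shows "omega_mod \<delta> \<mu> lam x \<le> omega_mod \<delta> \<mu> lam m + Dw \<delta> \<mu> lam m * (x - m)"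
proof -
  define g where "g t = \<delta> / lam * t - 1/4 * \<delta> * lam powr (-1 - \<mu>) * t powr (1 + \<mu>)" for t
  define g' where "g' t = \<delta> / lam - (1 + \<mu>) / 4 * \<delta> * lam powr (-1 - \<mu>) * t powr \<mu>" for t
  define L where "L t = 3/4 * \<delta> + 1/2 * \<delta> * ln (t / lam)" for t
  have gt: "g y \<le> g n + g' n * (y - n)" if "0 \<le> y" "0 < n" for y n
    unfolding g_def g'_def using g_tangent[of y n lam \<delta> \<mu>] that l d mu by simp
  have Lt: "L y \<le> L n + \<delta> / (2 * n) * (y - n)" if "0 < y" "0 < n" for y n
    unfolding L_def using L_tangent[of y n lam \<delta>] that l d by simp
  have gl: "g lam = 3/4 * \<delta>" unfolding g_def using lam_facts(1)[OF l d mu] .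
  have gl': "g' lam \<ge> \<delta> / (2 * lam)" unfolding g'_def using lam_facts(2)[OF l d mu] .
  have Ll: "L lam = 3/4 * \<delta>" unfolding L_def using l by simp
  have g'mono: "g' n \<ge> g' lam" if "0 < n" "n \<le> lam" for n
  proof -
    have "n powr \<mu> \<le> lam powr \<mu>" using that mu by (intro powr_mono2) auto
    then have "(1 + \<mu>) / 4 * \<delta> * lam powr (-1 - \<mu>) * n powr \<mu> \<le> (1 + \<mu>) / 4 * \<delta> * lam powr (-1 - \<mu>) * lam powr \<mu>"
      using mu d by (intro mult_left_mono) auto
    then show ?thesis unfolding g'_def by simp
  qed
  have om: "omega_mod \<delta> \<mu> lam t = (if t \<le> lam then g t else L t)" for t
    unfolding omega_mod_def g_def L_def by simp
  have Dm: "Dw \<delta> \<mu> lam n = (if n \<le> lam then g' n else \<delta> / (2 * n))" for n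
    unfolding Dw_def g'_def by simp
  show ?thesis
  proof (cases "m \<le> lam")
    case mle: True
    show ?thesis
    proof (cases "x \<le> lam")
      case True
      then show ?thesis using gt[OF x m] mle by (simp add: om Dm)
    next
      case False
      have "L x \<le> L lam + \<delta> / (2 * lam) * (x - lam)" using Lt[of x lam] False l by simp
      also have "\<dots> \<le> g lam + g' lam * (x - lam)"
      proof -
        have "\<delta> / (2 * lam) * (x - lam) \<le> g' lam * (x - lam)"
          using gl' False by (intro mult_right_mono) auto
        then show ?thesis using gl Ll by simp
      qed
      also have "\<dots> \<le> g m + g' m * (lam - m) + g' m * (x - lam)"
      proof -
        have "g' lam * (x - lam) \<le> g' m * (x - lam)"
          using g'mono[OF m mle] False by (intro mult_right_mono) auto
        then show ?thesis using gt[of lam m] l m by linarith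
      qed
      finally show ?thesis using False mle by (simp add: om Dm algebra_simps)
    qed
  next
    case mgt: False
    show ?thesis
    proof (cases "x \<le> lam")
      case True
      have "g x \<le> g lam + g' lam * (x - lam)" using gt[OF x l] .
      also have "\<dots> \<le> L lam + \<delta> / (2 * lam) * (x - lam)"
      proof -
        have "g' lam * (x - lam) \<le> \<delta> / (2 * lam) * (x - lam)"
          using gl' True by (intro mult_right_mono_neg) auto
        then show ?thesis using gl Ll by simp
      qed
      also have "\<dots> \<le> L m + \<delta> / (2 * m) * (lam - m) + \<delta> / (2 * m) * (x - lam)"
      proof -
        have "L lam \<le> L m + \<delta> / (2 * m) * (lam - m)" using Lt[OF l m] .
        moreover have "\<delta> / (2 * lam) * (x - lam) \<le> \<delta> / (2 * m) * (x - lam)"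
          using True mgt l d by (intro mult_right_mono_neg) (auto simp: frac_le)
        ultimately show ?thesis by simp
      qed
      also have "\<dots> = L m + \<delta> / (2 * m) * ((lam - m) + (x - lam))"
        by (simp only: distrib_left add.assoc)
      also have "\<dots> = L m + \<delta> / (2 * m) * (x - m)" by simp
      finally show ?thesis using True mgt by (simp add: om Dm)
    next
      case False
      then show ?thesis using Lt[of x m] mgt l by (simp add: om Dm)
    qed
  qed
qed

lemma lam_pow_id:
  fixes x lam \<mu> :: real
  assumes "0 \<le> x" "0 < lam"
  shows "lam powr (-1 - \<mu>) * x powr (1 + \<mu>) = (x / lam) powr (1 + \<mu>)"
proof -
  have "lam powr (-1 - \<mu>) = inverse (lam powr (1 + \<mu>))"
    using assms by (simp add: powr_minus[symmetric])
  then show ?thesis using assms by (simp add: powr_divide field_simps)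
qed

lemma omega_le_lin:
  fixes x lam \<delta> \<mu> :: real
  assumes "0 \<le> x" "x \<le> lam" "0 < lam" "0 < \<delta>" "0 < \<mu>"
  shows "omega_mod \<delta> \<mu> lam x \<le> \<delta> * (x / lam)"
    and "0 \<le> omega_mod \<delta> \<mu> lam x"
proof -
  have e: "omega_mod \<delta> \<mu> lam x = \<delta> * (x / lam) - 1/4 * \<delta> * (x / lam) powr (1 + \<mu>)"
    using assms lam_pow_id[of x lam \<mu>] by (simp add: omega_mod_def mult.assoc)
  have t: "0 \<le> x / lam" "x / lam \<le> 1" using assms by auto
  have p: "(x / lam) powr (1 + \<mu>) \<le> (x / lam) powr 1"
    using t assms by (intro powr_mono') auto
  have p0: "0 \<le> (x / lam) powr (1 + \<mu>)" by simp
  show "omega_mod \<delta> \<mu> lam x \<le> \<delta> * (x / lam)" using e p0 assms by simp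
  have "1/4 * \<delta> * (x / lam) powr (1 + \<mu>) \<le> 1/4 * \<delta> * (x / lam)"
    using p t assms by (intro mult_left_mono) auto
  moreover have "0 \<le> \<delta> * (x / lam)" using t assms by simp
  ultimately show "0 \<le> omega_mod \<delta> \<mu> lam x" using e by linarith
qed

lemma omega_nonneg:
  fixes x lam \<delta> \<mu> :: real
  assumes "0 \<le> x" "0 < lam" "0 < \<delta>" "0 < \<mu>"
  shows "0 \<le> omega_mod \<delta> \<mu> lam x"
proof (cases "x \<le> lam")
  case True then show ?thesis using omega_le_lin(2) assms by blast
next
  case False
  then have "0 \<le> ln (x / lam)" using assms by simp
  then show ?thesis using False assms by (simp add: omega_mod_def)
qed

lemma ln_le_powr_div:
  fixes t \<mu> :: real
  assumes "0 < t" "0 < \<mu>"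
  shows "ln t \<le> t powr \<mu> / \<mu>"
proof -
  have "ln (t powr \<mu>) \<le> t powr \<mu> - 1" using assms by (intro ln_le_minus_one) auto
  then have "\<mu> * ln t \<le> t powr \<mu>" using assms by (simp add: ln_powr)
  then show ?thesis using assms by (simp add: field_simps)
qed

lemma omega_powr_bound:
  fixes x lam \<delta> \<mu> :: real
  assumes "0 \<le> x" "0 < lam" "0 < \<delta>" "0 < \<mu>" "\<mu> \<le> 1"
  shows "omega_mod \<delta> \<mu> lam x \<le> 2 / \<mu> * \<delta> * (x / lam) powr \<mu>"
proof (cases "x \<le> lam")
  case True
  have t: "0 \<le> x / lam" "x / lam \<le> 1" using assms True by auto
  have "x / lam = (x / lam) powr 1" using t assms by simp
  also have "\<dots> \<le> (x / lam) powr \<mu>" using t assms by (intro powr_mono') auto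
  finally have "\<delta> * (x / lam) \<le> \<delta> * (x / lam) powr \<mu>" using assms by (intro mult_left_mono) auto
  also have "\<dots> \<le> 2 / \<mu> * \<delta> * (x / lam) powr \<mu>"
  proof -
    have "1 \<le> 2 / \<mu>" using assms by (simp add: field_simps)
    then have "1 * (\<delta> * (x / lam) powr \<mu>) \<le> 2 / \<mu> * (\<delta> * (x / lam) powr \<mu>)"
      using assms by (intro mult_right_mono) auto
    then show ?thesis by (simp add: mult_ac)
  qed
  finally show ?thesis using omega_le_lin(1)[OF assms(1) True assms(2-4)] by linarith
next
  case False
  define t where "t = x / lam"
  have t1: "1 < t" using False assms by (simp add: t_def)
  have tp: "1 \<le> t powr \<mu>" using t1 assms by (simp add: ge_one_powr_ge_zero)
  have lt: "ln t \<le> t powr \<mu> / \<mu>" using ln_le_powr_div t1 assms by simp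
  have "omega_mod \<delta> \<mu> lam x = 3/4 * \<delta> + 1/2 * \<delta> * ln t" using False by (simp add: omega_mod_def t_def)
  also have "\<dots> \<le> 3/4 * \<delta> * t powr \<mu> + 1/2 * \<delta> * (t powr \<mu> / \<mu>)"
    using tp lt assms by (intro add_mono mult_left_mono) auto
  also have "\<dots> = \<delta> * t powr \<mu> * (3/4 + 1 / (2 * \<mu>))" by (simp add: field_simps)
  also have "\<dots> \<le> \<delta> * t powr \<mu> * (2 / \<mu>)"
    using assms by (intro mult_left_mono) (auto simp: field_simps)
  finally show ?thesis by (simp add: t_def mult_ac)
qed

lemma omega_far_big:
  fixes a r \<xi> lam \<delta> \<mu> :: real
  assumes "0 \<le> a" "a \<le> \<xi> + r" "\<xi> < r" "lam < \<xi>" "0 < lam" "0 < \<delta>" "0 < \<mu>" "\<mu> \<le> 1"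
  shows "omega_mod \<delta> \<mu> lam a - omega_mod \<delta> \<mu> lam \<xi> \<le> \<delta> / \<mu> * (r / \<xi>) powr \<mu>"
proof -
  have xi: "omega_mod \<delta> \<mu> lam \<xi> = 3/4 * \<delta> + 1/2 * \<delta> * ln (\<xi> / lam)"
    using assms by (simp add: omega_mod_def)
  have R0: "0 \<le> \<delta> / \<mu> * (r / \<xi>) powr \<mu>" using assms by simp
  show ?thesis
  proof (cases "a \<le> lam")
    case True
    have "omega_mod \<delta> \<mu> lam a \<le> omega_mod \<delta> \<mu> lam lam + Dw \<delta> \<mu> lam lam * (a - lam)"
      using omega_tangent[of a lam lam \<delta> \<mu>] assms by simp
    moreover have "Dw \<delta> \<mu> lam lam \<ge> 0"
    proof -
      have "0 < \<delta> / (2 * lam)" using assms by simp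
      moreover have "Dw \<delta> \<mu> lam lam = \<delta> / lam - (1 + \<mu>) / 4 * \<delta> * lam powr (-1 - \<mu>) * lam powr \<mu>"
        by (simp add: Dw_def)
      ultimately show ?thesis using lam_facts(2)[of lam \<delta> \<mu>] assms by linarith
    qed
    moreover have "omega_mod \<delta> \<mu> lam lam = 3/4 * \<delta>"
      using lam_facts(1)[of lam \<delta> \<mu>] assms by (simp add: omega_mod_def)
    moreover have "0 \<le> ln (\<xi> / lam)" using assms by simp
    ultimately have "omega_mod \<delta> \<mu> lam a \<le> omega_mod \<delta> \<mu> lam \<xi>"
    proof -
      assume h1: "omega_mod \<delta> \<mu> lam a \<le> omega_mod \<delta> \<mu> lam lam + Dw \<delta> \<mu> lam lam * (a - lam)"
        and h2: "Dw \<delta> \<mu> lam lam \<ge> 0" and h3: "omega_mod \<delta> \<mu> lam lam = 3/4 * \<delta>"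
        and h4: "0 \<le> ln (\<xi> / lam)"
      have "Dw \<delta> \<mu> lam lam * (a - lam) \<le> 0" using h2 True by (intro mult_nonneg_nonpos) auto
      moreover have "0 \<le> 1/2 * \<delta> * ln (\<xi> / lam)" using h4 assms by simp
      ultimately show ?thesis using h1 h3 xi by linarith
    qed
    then show ?thesis using R0 by linarith
  next
    case False
    define s where "s = r / \<xi>"
    have s1: "1 < s" using assms by (simp add: s_def)
    have "omega_mod \<delta> \<mu> lam a - omega_mod \<delta> \<mu> lam \<xi> = 1/2 * \<delta> * (ln (a / lam) - ln (\<xi> / lam))"
      using False xi by (simp add: omega_mod_def algebra_simps)
    also have "ln (a / lam) - ln (\<xi> / lam) = ln (a / \<xi>)"
      using assms False by (simp add: ln_div)
    also have "ln (a / \<xi>) \<le> ln (2 * s)"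
      using assms False by (subst ln_le_cancel_iff) (auto simp: s_def field_simps)
    also have "ln (2 * s) \<le> (2 * s) powr \<mu> / \<mu>" using ln_le_powr_div[of "2 * s" "\<mu>"] s1 assms by simp
    also have "(2 * s) powr \<mu> = 2 powr \<mu> * s powr \<mu>" by (rule powr_mult)
    also have "2 powr \<mu> \<le> 2" using assms powr_mono[of \<mu> 1 2] by simp
    finally have "omega_mod \<delta> \<mu> lam a - omega_mod \<delta> \<mu> lam \<xi> \<le> 1/2 * \<delta> * (2 * s powr \<mu> / \<mu>)"
      using assms by (simp add: mult_left_mono divide_right_mono mult_right_mono)
    then show ?thesis by (simp add: s_def)
  qed
qed

definition Fw :: "real \<Rightarrow> real \<Rightarrow> real \<Rightarrow> real" where
  "Fw \<mu> lam \<xi> = (if \<xi> \<le> lam then (\<xi> / lam) powr \<mu> else 1)"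

definition phiw :: "real \<Rightarrow> real \<Rightarrow> real" where
  "phiw \<mu> s = (if s \<le> 1 then s^2 else s powr \<mu>)"

lemma Dw_bounds:
  fixes \<xi> lam \<delta> \<mu> :: real
  assumes "0 < \<xi>" "0 < lam" "0 < \<delta>" "0 < \<mu>" "\<mu> \<le> 1"
  shows "0 \<le> Dw \<delta> \<mu> lam \<xi>" "Dw \<delta> \<mu> lam \<xi> * \<xi> \<le> \<delta> * Fw \<mu> lam \<xi>"
proof -
  have "0 \<le> Dw \<delta> \<mu> lam \<xi> \<and> Dw \<delta> \<mu> lam \<xi> * \<xi> \<le> \<delta> * Fw \<mu> lam \<xi>"
  proof (cases "\<xi> \<le> lam")
    case True
    have "\<xi> powr \<mu> \<le> lam powr \<mu>" using True assms by (intro powr_mono2) auto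
    then have m1: "(1 + \<mu>) / 4 * \<delta> * lam powr (-1 - \<mu>) * \<xi> powr \<mu> \<le> (1 + \<mu>) / 4 * \<delta> * lam powr (-1 - \<mu>) * lam powr \<mu>"
      using assms by (intro mult_left_mono) auto
    have dd: "Dw \<delta> \<mu> lam \<xi> = \<delta> / lam - (1 + \<mu>) / 4 * \<delta> * lam powr (-1 - \<mu>) * \<xi> powr \<mu>"
      using True by (simp add: Dw_def)
    have lo: "\<delta> / (2 * lam) \<le> Dw \<delta> \<mu> lam \<xi>"
      using lam_facts(2)[of lam \<delta> \<mu>] assms m1 dd by linarith
    have hi: "Dw \<delta> \<mu> lam \<xi> \<le> \<delta> / lam" using True assms unfolding Dw_def by simp
    have t: "0 \<le> \<xi> / lam" "\<xi> / lam \<le> 1" using assms True by auto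
    have "\<xi> / lam = (\<xi> / lam) powr 1" using t assms by simp
    also have "\<dots> \<le> (\<xi> / lam) powr \<mu>" using t assms by (intro powr_mono') auto
    finally have q: "\<xi> / lam \<le> (\<xi> / lam) powr \<mu>" .
    have "Dw \<delta> \<mu> lam \<xi> * \<xi> \<le> \<delta> / lam * \<xi>" using hi assms by (intro mult_right_mono) auto
    also have "\<dots> = \<delta> * (\<xi> / lam)" by simp
    also have "\<dots> \<le> \<delta> * (\<xi> / lam) powr \<mu>" using q assms by (intro mult_left_mono) auto
    finally have "Dw \<delta> \<mu> lam \<xi> * \<xi> \<le> \<delta> * (\<xi> / lam) powr \<mu>" .
    moreover have "0 \<le> \<delta> / (2 * lam)" using assms by simp
    ultimately show ?thesis using lo True unfolding Fw_def by simp
  next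
    case False
    then show ?thesis using assms unfolding Dw_def Fw_def by simp
  qed
  then show "0 \<le> Dw \<delta> \<mu> lam \<xi>" "Dw \<delta> \<mu> lam \<xi> * \<xi> \<le> \<delta> * Fw \<mu> lam \<xi>" by auto
qed

lemma core_bound:
  fixes a b r \<xi> lam \<delta> \<mu> :: real
  assumes a: "0 \<le> a" "a \<le> \<xi> + r" and b: "0 \<le> b" "b \<le> \<xi> + r"
    and ab: "a + b \<le> 2 * sqrt (\<xi>^2 + r^2)"
    and pos: "0 < \<xi>" "0 < r" "0 < lam" "0 < \<delta>" "0 < \<mu>" "\<mu> \<le> 1"
  shows "(omega_mod \<delta> \<mu> lam a + omega_mod \<delta> \<mu> lam b) / 2 - omega_mod \<delta> \<mu> lam \<xi>
           \<le> 4 / \<mu> * \<delta> * Fw \<mu> lam \<xi> * phiw \<mu> (r / \<xi>)"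
proof -
  have F0: "0 \<le> Fw \<mu> lam \<xi>" unfolding Fw_def by simp
  have K1: "1 \<le> 4 / \<mu>" using pos by (simp add: field_simps)
  show ?thesis
  proof (cases "r \<le> \<xi>")
    case True
    define D where "D = Dw \<delta> \<mu> lam \<xi>"
    have D0: "0 \<le> D" and DF: "D * \<xi> \<le> \<delta> * Fw \<mu> lam \<xi>" using Dw_bounds[of \<xi> lam \<delta> \<mu>] pos by (auto simp: D_def)
    have ta: "omega_mod \<delta> \<mu> lam a \<le> omega_mod \<delta> \<mu> lam \<xi> + D * (a - \<xi>)"
      using omega_tangent[of a \<xi> lam \<delta> \<mu>] a pos by (simp add: D_def)
    have tb: "omega_mod \<delta> \<mu> lam b \<le> omega_mod \<delta> \<mu> lam \<xi> + D * (b - \<xi>)"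
      using omega_tangent[of b \<xi> lam \<delta> \<mu>] b pos by (simp add: D_def)
    have sq: "sqrt (\<xi>^2 + r^2) \<le> \<xi> + r^2 / (2 * \<xi>)"
    proof -
      have "(\<xi> + r^2 / (2 * \<xi>))^2 = \<xi>^2 + r^2 + (r^2 / (2 * \<xi>))^2"
        using pos by (simp add: power2_eq_square field_simps)
      then have "\<xi>^2 + r^2 \<le> (\<xi> + r^2 / (2 * \<xi>))^2" by simp
      moreover have "0 \<le> \<xi> + r^2 / (2 * \<xi>)" using pos by simp
      ultimately show ?thesis by (intro real_le_lsqrt) auto
    qed
    have "(a + b) / 2 - \<xi> \<le> r^2 / (2 * \<xi>)"
    proof -
      define S where "S = sqrt (\<xi>^2 + r^2)"
      define T where "T = r^2 / (2 * \<xi>)"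
      have "a + b \<le> 2 * S" "S \<le> \<xi> + T" using ab sq by (simp_all add: S_def T_def)
      then have "(a + b) / 2 - \<xi> \<le> T" by argo
      then show ?thesis by (simp add: T_def)
    qed
    then have "D * ((a + b) / 2 - \<xi>) \<le> D * (r^2 / (2 * \<xi>))" using D0 by (intro mult_left_mono)
    moreover have "(omega_mod \<delta> \<mu> lam a + omega_mod \<delta> \<mu> lam b) / 2 - omega_mod \<delta> \<mu> lam \<xi>
       \<le> D * ((a + b) / 2 - \<xi>)" using ta tb by (simp add: field_simps)
    moreover have "D * (r^2 / (2 * \<xi>)) = (D * \<xi>) * (r / \<xi>)^2 / 2"
      using pos by (simp add: power2_eq_square field_simps)
    moreover have "(D * \<xi>) * (r / \<xi>)^2 / 2 \<le> (\<delta> * Fw \<mu> lam \<xi>) * (r / \<xi>)^2"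
    proof -
      have "(D * \<xi>) * (r / \<xi>)^2 \<le> (\<delta> * Fw \<mu> lam \<xi>) * (r / \<xi>)^2"
        using DF by (intro mult_right_mono) auto
      moreover have "0 \<le> (D * \<xi>) * (r / \<xi>)^2" using D0 pos by simp
      ultimately show ?thesis by argo
    qed
    moreover have "(\<delta> * Fw \<mu> lam \<xi>) * (r / \<xi>)^2 \<le> 4 / \<mu> * ((\<delta> * Fw \<mu> lam \<xi>) * (r / \<xi>)^2)"
    proof -
      have "0 \<le> (\<delta> * Fw \<mu> lam \<xi>) * (r / \<xi>)^2" using F0 pos by simp
      from mult_right_mono[OF K1 this] show ?thesis by simp
    qed
    moreover have "phiw \<mu> (r / \<xi>) = (r / \<xi>)^2" using True pos by (simp add: phiw_def)
    ultimately show ?thesis by (simp add: mult_ac)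
  next
    case False
    have ph: "phiw \<mu> (r / \<xi>) = (r / \<xi>) powr \<mu>" using False pos by (simp add: phiw_def)
    have one: "omega_mod \<delta> \<mu> lam x - omega_mod \<delta> \<mu> lam \<xi> \<le> 4 / \<mu> * \<delta> * Fw \<mu> lam \<xi> * (r / \<xi>) powr \<mu>"
      if x: "0 \<le> x" "x \<le> \<xi> + r" for x
    proof (cases "\<xi> \<le> lam")
      case True
      define A where "A = (\<xi> / lam) powr \<mu>"
      define B where "B = (r / \<xi>) powr \<mu>"
      have AB0: "0 \<le> A * B" by (simp add: A_def B_def)
      have p1: "omega_mod \<delta> \<mu> lam x \<le> 2 / \<mu> * \<delta> * (x / lam) powr \<mu>"
        using omega_powr_bound[of x lam \<delta> \<mu>] x pos by simp
      have "(x / lam) powr \<mu> \<le> (2 * ((\<xi> / lam) * (r / \<xi>))) powr \<mu>"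
        using x False pos by (intro powr_mono2) (auto simp: field_simps)
      also have "(2 * ((\<xi> / lam) * (r / \<xi>))) powr \<mu> = 2 powr \<mu> * (A * B)"
        unfolding A_def B_def by (simp only: powr_mult)
      also have "\<dots> \<le> 2 * (A * B)"
        using AB0 pos powr_mono[of \<mu> 1 2] by (intro mult_right_mono) auto
      finally have p2: "(x / lam) powr \<mu> \<le> 2 * (A * B)" .
      have "2 / \<mu> * \<delta> * (x / lam) powr \<mu> \<le> 2 / \<mu> * \<delta> * (2 * (A * B))"
        using p2 pos by (intro mult_left_mono) auto
      with p1 have "omega_mod \<delta> \<mu> lam x \<le> 2 / \<mu> * \<delta> * (2 * (A * B))" by linarith
      also have "\<dots> = 4 / \<mu> * \<delta> * A * B" by (simp add: field_simps)
      finally have "omega_mod \<delta> \<mu> lam x \<le> 2 / \<mu> * \<delta> * (2 * ((\<xi> / lam) powr \<mu> * (r / \<xi>) powr \<mu>))"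
        by (simp add: A_def B_def field_simps)
      moreover have "0 \<le> omega_mod \<delta> \<mu> lam \<xi>" using omega_nonneg[of \<xi> lam \<delta> \<mu>] pos by simp
      ultimately show ?thesis using True by (simp add: Fw_def mult_ac)
    next
      case xl: False
      have "omega_mod \<delta> \<mu> lam x - omega_mod \<delta> \<mu> lam \<xi> \<le> \<delta> / \<mu> * (r / \<xi>) powr \<mu>"
        using omega_far_big[of x \<xi> r lam \<delta> \<mu>] x False xl pos by simp
      also have "\<dots> \<le> 4 / \<mu> * \<delta> * (r / \<xi>) powr \<mu>"
        using pos by (intro mult_right_mono) (auto simp: field_simps)
      finally show ?thesis using xl by (simp add: Fw_def)
    qed
    have "(omega_mod \<delta> \<mu> lam a + omega_mod \<delta> \<mu> lam b) / 2 - omega_mod \<delta> \<mu> lam \<xi>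
       = ((omega_mod \<delta> \<mu> lam a - omega_mod \<delta> \<mu> lam \<xi>) + (omega_mod \<delta> \<mu> lam b - omega_mod \<delta> \<mu> lam \<xi>)) / 2"
      by (simp add: field_simps)
    also have "\<dots> \<le> (4 / \<mu> * \<delta> * Fw \<mu> lam \<xi> * (r / \<xi>) powr \<mu> + 4 / \<mu> * \<delta> * Fw \<mu> lam \<xi> * (r / \<xi>) powr \<mu>) / 2"
      using one[OF a] one[OF b] by (intro divide_right_mono add_mono) auto
    finally show ?thesis using ph by simp
  qed
qed

lemma shell_bound:
  fixes p t :: real
  assumes t: "0 < t"
  shows "(\<integral>\<^sup>+w. ennreal (norm w powr (-p)) * indicator {w::'a::euclidean_space. t/2 < norm w \<and> norm w \<le> t} w \<partial>lborel)
    \<le> ennreal (2 powr \<bar>p\<bar> * unit_ball_vol DIM('a) * t powr (DIM('a) - p))"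
proof -
  define c where "c = 2 powr \<bar>p\<bar> * t powr (-p)"
  have pw: "norm w powr (-p) \<le> c" if "t/2 < norm w" "norm w \<le> t" for w :: 'a
  proof (cases "p \<ge> 0")
    case True
    have "norm w powr (-p) \<le> (t/2) powr (-p)" using that t True by (intro powr_mono2') auto
    also have "(t/2) powr (-p) = c" using t True
      by (simp add: c_def powr_divide powr_minus field_simps)
    finally show ?thesis .
  next
    case False
    have "norm w powr (-p) \<le> t powr (-p)" using that t False by (intro powr_mono2) auto
    also have "t powr (-p) \<le> c" unfolding c_def
    proof -
      have "1 \<le> 2 powr \<bar>p\<bar>" by (simp add: ge_one_powr_ge_zero)
      then have "1 * t powr (-p) \<le> 2 powr \<bar>p\<bar> * t powr (-p)"
        by (intro mult_right_mono) auto
      then show "t powr (-p) \<le> 2 powr \<bar>p\<bar> * t powr (-p)" by simp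
    qed
    finally show ?thesis .
  qed
  have "(\<integral>\<^sup>+w. ennreal (norm w powr (-p)) * indicator {w::'a. t/2 < norm w \<and> norm w \<le> t} w \<partial>lborel)
     \<le> (\<integral>\<^sup>+w. ennreal c * indicator (cball (0::'a) t) w \<partial>lborel)"
  proof (rule nn_integral_mono)
    fix w :: 'a
    show "ennreal (norm w powr (-p)) * indicator {w::'a. t/2 < norm w \<and> norm w \<le> t} w
       \<le> ennreal c * indicator (cball 0 t) w"
    proof (cases "t/2 < norm w \<and> norm w \<le> t")
      case True
      then show ?thesis using pw[of w] by (simp add: mem_cball_0 indicator_def ennreal_leI)
    qed (simp add: indicator_def)
  qed
  also have "\<dots> = ennreal c * emeasure lborel (cball (0::'a) t)"
    by (simp add: nn_integral_cmult_indicator)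
  also have "\<dots> = ennreal (c * (unit_ball_vol DIM('a) * t ^ DIM('a)))"
    using t by (simp add: emeasure_cball c_def ennreal_mult)
  also have "c * (unit_ball_vol DIM('a) * t ^ DIM('a)) = 2 powr \<bar>p\<bar> * unit_ball_vol DIM('a) * t powr (DIM('a) - p)"
    using t by (simp add: c_def powr_realpow[symmetric] powr_diff powr_minus field_simps)
  finally show ?thesis .
qed

lemma dyadic_bound:
  fixes p :: real and t :: "nat \<Rightarrow> real" and U :: "'a::euclidean_space set"
  assumes U: "U \<in> sets lborel" and t: "\<And>k. 0 < t k"
    and cov: "\<And>w. w \<in> U \<Longrightarrow> \<exists>k. t k / 2 < norm w \<and> norm w \<le> t k"
    and sm: "summable (\<lambda>k. t k powr (DIM('a) - p))"
  shows "(\<integral>\<^sup>+w. ennreal (norm w powr (-p)) * indicator U w \<partial>lborel)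
    \<le> ennreal (2 powr \<bar>p\<bar> * unit_ball_vol DIM('a) * (\<Sum>k. t k powr (DIM('a) - p)))"
proof -
  define S where "S k = {w::'a. t k / 2 < norm w \<and> norm w \<le> t k}" for k
  have Sm: "S k \<in> sets lborel" for k unfolding S_def by measurable
  have pw: "ennreal (norm w powr (-p)) * indicator U w \<le> (\<Sum>k. ennreal (norm w powr (-p)) * indicator (S k) w)" for w
  proof (cases "w \<in> U")
    case True
    then obtain k where k: "w \<in> S k" using cov unfolding S_def by blast
    have "ennreal (norm w powr (-p)) * indicator U w = (\<Sum>i\<in>{k}. ennreal (norm w powr (-p)) * indicator (S i) w)"
      using True k by simp
    also have "\<dots> \<le> (\<Sum>i. ennreal (norm w powr (-p)) * indicator (S i) w)"
      by (intro sum_le_suminf) (auto intro: summableI)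
    finally show ?thesis .
  qed simp
  have "(\<integral>\<^sup>+w. ennreal (norm w powr (-p)) * indicator U w \<partial>lborel)
      \<le> (\<integral>\<^sup>+w. (\<Sum>k. ennreal (norm w powr (-p)) * indicator (S k) w) \<partial>lborel)"
    by (intro nn_integral_mono pw)
  also have "\<dots> = (\<Sum>k. \<integral>\<^sup>+w. ennreal (norm w powr (-p)) * indicator (S k) w \<partial>lborel)"
    by (rule nn_integral_suminf) (use Sm in measurable)
  also have "\<dots> \<le> (\<Sum>k. ennreal (2 powr \<bar>p\<bar> * unit_ball_vol DIM('a) * t k powr (DIM('a) - p)))"
    by (intro suminf_le summableI) (unfold S_def, rule shell_bound[OF t])
  also have "\<dots> = ennreal (\<Sum>k. 2 powr \<bar>p\<bar> * unit_ball_vol DIM('a) * t k powr (DIM('a) - p))"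
    by (intro suminf_ennreal2 summable_mult sm) auto
  also have "(\<Sum>k. 2 powr \<bar>p\<bar> * unit_ball_vol DIM('a) * t k powr (DIM('a) - p))
      = 2 powr \<bar>p\<bar> * unit_ball_vol DIM('a) * (\<Sum>k. t k powr (DIM('a) - p))"
    by (intro suminf_mult sm)
  finally show ?thesis .
qed

lemma log_ceiling_bracket:
  fixes r :: real
  assumes "0 < r"
  shows "2 powr (real_of_int \<lceil>log 2 r\<rceil> - 1) < r" "r \<le> 2 powr (real_of_int \<lceil>log 2 r\<rceil>)"
proof -
  have a: "real_of_int \<lceil>log 2 r\<rceil> - 1 < log 2 r" "log 2 r \<le> real_of_int \<lceil>log 2 r\<rceil>"
    by linarith+
  have "2 powr (real_of_int \<lceil>log 2 r\<rceil> - 1) < 2 powr (log 2 r)"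
    using a(1) by (intro powr_less_mono) auto
  then show "2 powr (real_of_int \<lceil>log 2 r\<rceil> - 1) < r" using assms by simp
  have "2 powr (log 2 r) \<le> 2 powr (real_of_int \<lceil>log 2 r\<rceil>)"
    using a(2) by (intro powr_mono) auto
  then show "r \<le> 2 powr (real_of_int \<lceil>log 2 r\<rceil>)" using assms by simp
qed

lemma inner_finite:
  fixes s :: real
  assumes s: "0 < s"
  shows "(\<integral>\<^sup>+w. ennreal (norm w powr (-(DIM('a) - s))) * indicator {w::'a::euclidean_space. 0 < norm w \<and> norm w \<le> 1} w \<partial>lborel)
    \<le> ennreal (2 powr \<bar>DIM('a) - s\<bar> * unit_ball_vol DIM('a) * (\<Sum>k. (2 powr (- s)) ^ k))"
proof -
  define t where "t k = 2 powr (- real k)" for k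
  have eq: "t k powr (DIM('a) - (DIM('a) - s)) = (2 powr (- s)) ^ k" for k
    by (simp add: t_def powr_powr powr_power mult_ac)
  have "(\<integral>\<^sup>+w. ennreal (norm w powr (-(DIM('a) - s))) * indicator {w::'a. 0 < norm w \<and> norm w \<le> 1} w \<partial>lborel)
    \<le> ennreal (2 powr \<bar>DIM('a) - s\<bar> * unit_ball_vol DIM('a) * (\<Sum>k. t k powr (DIM('a) - (DIM('a) - s))))"
  proof (rule dyadic_bound)
    show "{w::'a. 0 < norm w \<and> norm w \<le> 1} \<in> sets lborel" by measurable
    show "0 < t k" for k by (simp add: t_def)
    show "summable (\<lambda>k. t k powr (DIM('a) - (DIM('a) - s)))"
    proof -
      have "2 powr (- s) < 2 powr 0" using s by (intro powr_less_mono) auto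
      then show ?thesis unfolding eq by (intro summable_geometric) auto
    qed
    fix w :: 'a assume "w \<in> {w. 0 < norm w \<and> norm w \<le> 1}"
    then have w: "0 < norm w" "norm w \<le> 1" by auto
    define j where "j = \<lceil>log 2 (norm w)\<rceil>"
    have "log 2 (norm w) \<le> 0" using w by simp
    then have j0: "j \<le> 0" unfolding j_def by linarith
    have "t (nat (- j)) = 2 powr (real_of_int j)" using j0 by (simp add: t_def)
    then show "\<exists>k. t k / 2 < norm w \<and> norm w \<le> t k"
      using log_ceiling_bracket[OF w(1)] unfolding j_def[symmetric]
      by (intro exI[of _ "nat (- j)"]) (simp add: powr_diff)
  qed
  then show ?thesis unfolding eq .
qed

lemma outer_finite:
  fixes s :: real
  assumes s: "0 < s"
  shows "(\<integral>\<^sup>+w. ennreal (norm w powr (-(DIM('a) + s))) * indicator {w::'a::euclidean_space. 1 < norm w} w \<partial>lborel)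
    \<le> ennreal (2 powr \<bar>DIM('a) + s\<bar> * unit_ball_vol DIM('a) * (\<Sum>k. 2 powr (- s) * (2 powr (- s)) ^ k))"
proof -
  define t where "t k = 2 powr (real k + 1)" for k
  have eq: "t k powr (DIM('a) - (DIM('a) + s)) = 2 powr (- s) * (2 powr (- s)) ^ k" for k
    by (simp add: t_def powr_powr powr_power powr_add[symmetric] algebra_simps)
  have "(\<integral>\<^sup>+w. ennreal (norm w powr (-(DIM('a) + s))) * indicator {w::'a. 1 < norm w} w \<partial>lborel)
    \<le> ennreal (2 powr \<bar>DIM('a) + s\<bar> * unit_ball_vol DIM('a) * (\<Sum>k. t k powr (DIM('a) - (DIM('a) + s))))"
  proof (rule dyadic_bound)
    show "{w::'a. 1 < norm w} \<in> sets lborel" by measurable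
    show "0 < t k" for k by (simp add: t_def)
    show "summable (\<lambda>k. t k powr (DIM('a) - (DIM('a) + s)))"
    proof -
      have "2 powr (- s) < 2 powr 0" using s by (intro powr_less_mono) auto
      then show ?thesis unfolding eq by (intro summable_mult summable_geometric) auto
    qed
    fix w :: 'a assume "w \<in> {w. 1 < norm w}"
    then have w: "0 < norm w" "1 < norm w" by auto
    define j where "j = \<lceil>log 2 (norm w)\<rceil>"
    have "0 < log 2 (norm w)" using w by simp
    then have j0: "1 \<le> j" unfolding j_def by linarith
    have "t (nat (j - 1)) = 2 powr (real_of_int j)" using j0 by (simp add: t_def)
    then show "\<exists>k. t k / 2 < norm w \<and> norm w \<le> t k"
      using log_ceiling_bracket[OF w(1)] unfolding j_def[symmetric]
      by (intro exI[of _ "nat (j - 1)"]) (simp add: powr_diff)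
  qed
  then show ?thesis unfolding eq .
qed

lemma omega_meas[measurable]: "omega_mod \<delta> \<mu> lam \<in> borel_measurable borel"
  unfolding omega_mod_def by measurable

lemma phiw_meas[measurable]: "phiw \<mu> \<in> borel_measurable borel"
  unfolding phiw_def by measurable

lemma distr_lborel_uminus: "distr lborel borel (\<lambda>x. - x) = (lborel :: 'a::euclidean_space measure)"
proof -
  have "(lborel :: 'a measure) = density (distr lborel borel (\<lambda>x. 0 + (-1::real) *\<^sub>R x)) (\<lambda>_. \<bar>-1::real\<bar>^DIM('a))"
    by (rule lborel_affine) simp
  then have "(lborel :: 'a measure) = distr lborel borel (\<lambda>x. - x)" by (simp add: density_1)
  then show ?thesis by simp
qed

lemma integral_reflect:
  fixes f :: "'a::euclidean_space \<Rightarrow> real"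
  assumes [measurable]: "f \<in> borel_measurable borel"
  shows "integral\<^sup>L lborel f = integral\<^sup>L lborel (\<lambda>x. f (- x))"
    and "integrable lborel f \<Longrightarrow> integrable lborel (\<lambda>x. f (- x))"
proof -
  have "integral\<^sup>L lborel f = integral\<^sup>L (distr lborel borel (\<lambda>x. - x)) f"
    by (simp add: distr_lborel_uminus)
  also have "\<dots> = integral\<^sup>L lborel (\<lambda>x. f (- x))"
    by (rule integral_distr) auto
  finally show "integral\<^sup>L lborel f = integral\<^sup>L lborel (\<lambda>x. f (- x))" .
  assume "integrable lborel f"
  then have "integrable (distr lborel borel (\<lambda>x. - x)) f" by (simp add: distr_lborel_uminus)
  then show "integrable lborel (\<lambda>x. f (- x))"
    by (subst (asm) integrable_distr_eq) auto
qed

lemma nn_integral_scale: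
  fixes f :: "'a::euclidean_space \<Rightarrow> ennreal" and c :: real
  assumes [measurable]: "f \<in> borel_measurable borel" and c: "0 < c"
  shows "(\<integral>\<^sup>+x. f x \<partial>lborel) = ennreal (c ^ DIM('a)) * (\<integral>\<^sup>+x. f (c *\<^sub>R x) \<partial>lborel)"
proof -
  have "(\<integral>\<^sup>+x. f x \<partial>lborel) = (\<integral>\<^sup>+x. f x \<partial>(density (distr lborel borel (\<lambda>x. 0 + c *\<^sub>R x)) (\<lambda>_. \<bar>c\<bar>^DIM('a))))"
    using lborel_affine[of c "0::'a"] c by simp
  also have "\<dots> = (\<integral>\<^sup>+x. ennreal (c ^ DIM('a)) * f (c *\<^sub>R x) \<partial>lborel)"
    using c by (simp add: nn_integral_density nn_integral_distr)
  also have "\<dots> = ennreal (c ^ DIM('a)) * (\<integral>\<^sup>+x. f (c *\<^sub>R x) \<partial>lborel)"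
    by (rule nn_integral_cmult) simp
  finally show ?thesis .
qed

lemma M_finite:
  fixes \<alpha> \<mu> :: real
  assumes "0 < \<alpha>" "\<alpha> < 2" "0 < \<mu>" "\<mu> < \<alpha>"
  shows "\<exists>R\<ge>0. (\<integral>\<^sup>+w. ennreal (phiw \<mu> (norm w) * norm w powr (-(DIM('a) + \<alpha>))) \<partial>(lborel :: 'a::euclidean_space measure)) \<le> ennreal R"
proof -
  define R1 where "R1 = 2 powr \<bar>DIM('a) - (2 - \<alpha>)\<bar> * unit_ball_vol DIM('a) * (\<Sum>k. (2 powr (- (2 - \<alpha>))) ^ k)"
  define R2 where "R2 = 2 powr \<bar>DIM('a) + (\<alpha> - \<mu>)\<bar> * unit_ball_vol DIM('a) * (\<Sum>k. 2 powr (- (\<alpha> - \<mu>)) * (2 powr (- (\<alpha> - \<mu>))) ^ k)"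
  have I1: "(\<integral>\<^sup>+w. ennreal (norm w powr (-(DIM('a) - (2 - \<alpha>)))) * indicator {w::'a. 0 < norm w \<and> norm w \<le> 1} w \<partial>lborel) \<le> ennreal R1"
    unfolding R1_def by (rule inner_finite) (use assms in simp)
  have I2: "(\<integral>\<^sup>+w. ennreal (norm w powr (-(DIM('a) + (\<alpha> - \<mu>)))) * indicator {w::'a. 1 < norm w} w \<partial>lborel) \<le> ennreal R2"
    unfolding R2_def by (rule outer_finite) (use assms in simp)
  have R1: "0 \<le> R1" unfolding R1_def
  proof -
    have "2 powr (- (2 - \<alpha>)) < 2 powr 0" using assms by (intro powr_less_mono) auto
    then show "0 \<le> 2 powr \<bar>DIM('a) - (2 - \<alpha>)\<bar> * unit_ball_vol DIM('a) * (\<Sum>k. (2 powr (- (2 - \<alpha>))) ^ k)"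
      by (simp add: suminf_geometric)
  qed
  have R2: "0 \<le> R2" unfolding R2_def
  proof -
    have q: "2 powr (- (\<alpha> - \<mu>)) < 2 powr 0" using assms by (intro powr_less_mono) auto
    then have "summable (\<lambda>k. (2 powr (- (\<alpha> - \<mu>))) ^ k)" by (intro summable_geometric) auto
    then have "0 \<le> (\<Sum>k. 2 powr (- (\<alpha> - \<mu>)) * (2 powr (- (\<alpha> - \<mu>))) ^ k)"
      by (intro suminf_nonneg summable_mult) auto
    then show "0 \<le> 2 powr \<bar>DIM('a) + (\<alpha> - \<mu>)\<bar> * unit_ball_vol DIM('a) * (\<Sum>k. 2 powr (- (\<alpha> - \<mu>)) * (2 powr (- (\<alpha> - \<mu>))) ^ k)"
      by simp
  qed
  have pw: "ennreal (phiw \<mu> (norm w) * norm w powr (-(DIM('a) + \<alpha>)))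
     \<le> ennreal (norm w powr (-(DIM('a) - (2 - \<alpha>)))) * indicator {w::'a. 0 < norm w \<and> norm w \<le> 1} w
       + ennreal (norm w powr (-(DIM('a) + (\<alpha> - \<mu>)))) * indicator {w::'a. 1 < norm w} w" for w :: 'a
  proof (cases "w = 0")
    case True then show ?thesis by (simp add: phiw_def)
  next
    case False
    then have r: "0 < norm w" by simp
    show ?thesis
    proof (cases "norm w \<le> 1")
      case True
      have "phiw \<mu> (norm w) * norm w powr (-(DIM('a) + \<alpha>)) = norm w powr 2 * norm w powr (-(DIM('a) + \<alpha>))"
        using True r by (simp add: phiw_def powr_numeral)
      also have "\<dots> = norm w powr (-(DIM('a) - (2 - \<alpha>)))"
        by (simp only: powr_add[symmetric]) (rule arg_cong[where f="\<lambda>x. norm w powr x"], simp)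
      finally show ?thesis using True r by (simp add: indicator_def)
    next
      case False
      have "phiw \<mu> (norm w) * norm w powr (-(DIM('a) + \<alpha>)) = norm w powr \<mu> * norm w powr (-(DIM('a) + \<alpha>))"
        using False r by (simp add: phiw_def)
      also have "\<dots> = norm w powr (-(DIM('a) + (\<alpha> - \<mu>)))"
        by (simp only: powr_add[symmetric]) (rule arg_cong[where f="\<lambda>x. norm w powr x"], simp)
      finally show ?thesis using False r by (simp add: indicator_def)
    qed
  qed
  have "(\<integral>\<^sup>+w. ennreal (phiw \<mu> (norm w) * norm w powr (-(DIM('a) + \<alpha>))) \<partial>(lborel :: 'a measure))
     \<le> (\<integral>\<^sup>+w. ennreal (norm w powr (-(DIM('a) - (2 - \<alpha>)))) * indicator {w::'a. 0 < norm w \<and> norm w \<le> 1} w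
       + ennreal (norm w powr (-(DIM('a) + (\<alpha> - \<mu>)))) * indicator {w::'a. 1 < norm w} w \<partial>lborel)"
    by (intro nn_integral_mono pw)
  also have "\<dots> = (\<integral>\<^sup>+w. ennreal (norm w powr (-(DIM('a) - (2 - \<alpha>)))) * indicator {w::'a. 0 < norm w \<and> norm w \<le> 1} w \<partial>lborel)
       + (\<integral>\<^sup>+w. ennreal (norm w powr (-(DIM('a) + (\<alpha> - \<mu>)))) * indicator {w::'a. 1 < norm w} w \<partial>lborel)"
    by (rule nn_integral_add) measurable
  also have "\<dots> \<le> ennreal R1 + ennreal R2" using I1 I2 by (rule add_mono)
  also have "\<dots> = ennreal (R1 + R2)" using R1 R2 by simp
  finally show ?thesis using R1 R2 by (intro exI[of _ "R1 + R2"]) auto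
qed

lemma norm_para:
  fixes x z :: "'a::real_inner"
  shows "norm (x - z)^2 + norm (x + z)^2 = 2 * (norm x^2 + norm z^2)"
  by (simp add: power2_norm_eq_inner inner_add_left inner_add_right inner_diff_left inner_diff_right inner_commute algebra_simps)

lemma sum_le_sqrt:
  fixes a b X :: real
  assumes "0 \<le> a" "0 \<le> b" "a^2 + b^2 = 2 * X"
  shows "a + b \<le> 2 * sqrt X"
proof -
  have e: "2 * (a^2 + b^2) - (a + b)^2 = (a - b)^2" by (simp add: power2_eq_square algebra_simps)
  have "0 \<le> (a - b)^2" by simp
  then have "(a + b)^2 \<le> 2 * (a^2 + b^2)" using e by linarith
  then have "(a + b)^2 \<le> 4 * X" using assms by simp
  then have "a + b \<le> sqrt (4 * X)" by (intro real_le_rsqrt)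
  also have "sqrt (4 * X) = 2 * sqrt X" by (simp add: real_sqrt_mult)
  finally show ?thesis .
qed

lemma aux_avg:
  fixes P X Y w :: real
  assumes "P \<noteq> 0"
  shows "((X - w) / P + (Y - w) / P) / 2 = ((X + Y) / 2 - w) / P"
  using assms by (simp add: field_simps)

lemma trunc_bound:
  fixes e :: "'a::euclidean_space" and \<alpha> \<mu> lam \<delta> \<xi> \<epsilon> R :: real
  assumes e: "e \<in> Basis" and a: "0 < \<alpha>" and mu: "0 < \<mu>" "\<mu> \<le> 1" and l: "0 < lam" and d: "0 < \<delta>"
    and x: "0 < \<xi>" and eps: "0 < \<epsilon>"
    and M: "(\<integral>\<^sup>+w. ennreal (phiw \<mu> (norm w) * norm w powr (-(DIM('a) + \<alpha>))) \<partial>(lborel::'a measure)) \<le> ennreal R"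
    and R: "0 \<le> R"
  shows "(LINT z : {z::'a. norm z > \<epsilon>} | lborel.
        (omega_mod \<delta> \<mu> lam (norm (\<xi> *\<^sub>R e - z)) - omega_mod \<delta> \<mu> lam \<xi>)
          / norm z powr (real DIM('a) + \<alpha>)) \<le> 4 / \<mu> * \<delta> * Fw \<mu> lam \<xi> * \<xi> powr (-\<alpha>) * R"
proof -
  define q where "q = real DIM('a) + \<alpha>"
  define g where "g z = (omega_mod \<delta> \<mu> lam (norm (\<xi> *\<^sub>R e - z)) - omega_mod \<delta> \<mu> lam \<xi>) / norm z powr q" for z :: 'a
  define S where "S = {z::'a. norm z > \<epsilon>}"
  define G where "G z = indicator S z * g z" for z
  define Phi where "Phi w = phiw \<mu> (norm w) * norm w powr (-q)" for w :: 'a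
  define Kb where "Kb = 4 / \<mu> * \<delta> * Fw \<mu> lam \<xi> * \<xi> powr (-q)"
  define h where "h z = Kb * Phi ((1/\<xi>) *\<^sub>R z)" for z
  have lhs: "(LINT z : {z::'a. norm z > \<epsilon>} | lborel.
        (omega_mod \<delta> \<mu> lam (norm (\<xi> *\<^sub>R e - z)) - omega_mod \<delta> \<mu> lam \<xi>)
          / norm z powr (real DIM('a) + \<alpha>)) = integral\<^sup>L lborel G"
  proof -
    have "(\<lambda>z. indicator {z::'a. norm z > \<epsilon>} z *\<^sub>R ((omega_mod \<delta> \<mu> lam (norm (\<xi> *\<^sub>R e - z)) - omega_mod \<delta> \<mu> lam \<xi>)
          / norm z powr (real DIM('a) + \<alpha>))) = G"
      by (rule ext) (simp add: G_def g_def S_def q_def)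
    then show ?thesis unfolding set_lebesgue_integral_def by simp
  qed
  have Sm[measurable]: "S \<in> sets borel" unfolding S_def by measurable
  have Gm[measurable]: "G \<in> borel_measurable borel" unfolding G_def g_def by measurable
  have Phim[measurable]: "Phi \<in> borel_measurable borel" unfolding Phi_def by measurable
  have hm[measurable]: "h \<in> borel_measurable borel" unfolding h_def by measurable
  have F0: "0 \<le> Fw \<mu> lam \<xi>" by (simp add: Fw_def)
  have Kb0: "0 \<le> Kb" using mu d F0 by (simp add: Kb_def)
  have phi0: "0 \<le> phiw \<mu> s" for s by (simp add: phiw_def)
  have Phi0: "0 \<le> Phi w" for w by (simp add: Phi_def phi0)
  have h0: "0 \<le> h z" for z using Kb0 Phi0 by (simp add: h_def)
  have hz: "h z = 4 / \<mu> * \<delta> * Fw \<mu> lam \<xi> * phiw \<mu> (norm z / \<xi>) / norm z powr q" if "z \<noteq> 0" for z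
  proof -
    have n: "norm ((1/\<xi>) *\<^sub>R z) = norm z / \<xi>" using x by simp
    have "\<xi> powr (-q) * (norm z / \<xi>) powr (-q) = (\<xi> * (norm z / \<xi>)) powr (-q)"
      by (rule powr_mult[symmetric])
    also have "\<xi> * (norm z / \<xi>) = norm z" using x by simp
    finally have p: "\<xi> powr (-q) * (norm z / \<xi>) powr (-q) = norm z powr (-q)" .
    have "h z = 4 / \<mu> * \<delta> * Fw \<mu> lam \<xi> * phiw \<mu> (norm z / \<xi>) * (\<xi> powr (-q) * (norm z / \<xi>) powr (-q))"
      unfolding h_def Kb_def Phi_def n by (simp add: mult_ac)
    also have "\<dots> = 4 / \<mu> * \<delta> * Fw \<mu> lam \<xi> * phiw \<mu> (norm z / \<xi>) / norm z powr q"
      unfolding p by (simp add: powr_minus divide_inverse)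
    finally show ?thesis .
  qed
  have pw: "(G z + G (- z)) / 2 \<le> h z" for z
  proof (cases "z \<in> S")
    case False
    then have "- z \<notin> S" by (simp add: S_def)
    then show ?thesis using False h0 by (simp add: G_def)
  next
    case True
    then have mS: "- z \<in> S" by (simp add: S_def)
    have "\<epsilon> < norm z" using True by (simp add: S_def)
    then have r: "0 < norm z" using eps by linarith
    then have z0: "z \<noteq> 0" by auto
    define A where "A = norm (\<xi> *\<^sub>R e - z)"
    define B where "B = norm (\<xi> *\<^sub>R e + z)"
    have ne: "norm (\<xi> *\<^sub>R e) = \<xi>" using e x by simp
    have A1: "A \<le> \<xi> + norm z" unfolding A_def using norm_triangle_ineq4[of "\<xi> *\<^sub>R e" z] ne by simp
    have B1: "B \<le> \<xi> + norm z" unfolding B_def using norm_triangle_ineq[of "\<xi> *\<^sub>R e" z] ne by simp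
    have AB: "A + B \<le> 2 * sqrt (\<xi>^2 + (norm z)^2)"
      using sum_le_sqrt[of A B "\<xi>^2 + (norm z)^2"] norm_para[of "\<xi> *\<^sub>R e" z] ne
      unfolding A_def B_def by simp
    have core: "(omega_mod \<delta> \<mu> lam A + omega_mod \<delta> \<mu> lam B) / 2 - omega_mod \<delta> \<mu> lam \<xi>
           \<le> 4 / \<mu> * \<delta> * Fw \<mu> lam \<xi> * phiw \<mu> (norm z / \<xi>)"
      using core_bound[of A \<xi> "norm z" B lam \<delta> \<mu>] A1 B1 AB r x l d mu by (simp add: A_def B_def)
    have P: "0 < norm z powr q" using r by simp
    have Gz: "G z = (omega_mod \<delta> \<mu> lam A - omega_mod \<delta> \<mu> lam \<xi>) / norm z powr q"
      using True by (simp add: G_def g_def A_def)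
    have Gmz: "G (- z) = (omega_mod \<delta> \<mu> lam B - omega_mod \<delta> \<mu> lam \<xi>) / norm z powr q"
      using mS by (simp add: G_def g_def B_def)
    have "(G z + G (- z)) / 2 = ((omega_mod \<delta> \<mu> lam A + omega_mod \<delta> \<mu> lam B) / 2 - omega_mod \<delta> \<mu> lam \<xi>) / norm z powr q"
      unfolding Gz Gmz by (rule aux_avg) (use P in simp)
    also have "\<dots> \<le> 4 / \<mu> * \<delta> * Fw \<mu> lam \<xi> * phiw \<mu> (norm z / \<xi>) / norm z powr q"
      using core P by (intro divide_right_mono) auto
    also have "\<dots> = h z" using hz[OF z0] by simp
    finally show ?thesis .
  qed
  have hn: "(\<integral>\<^sup>+z. ennreal (h z) \<partial>lborel) \<le> ennreal (Kb * \<xi> ^ DIM('a) * R)"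
  proof -
    have "(\<integral>\<^sup>+z. ennreal (h z) \<partial>lborel) = (\<integral>\<^sup>+z. ennreal Kb * ennreal (Phi ((1/\<xi>) *\<^sub>R z)) \<partial>lborel)"
      using Kb0 Phi0 by (simp add: h_def ennreal_mult)
    also have "\<dots> = ennreal Kb * (\<integral>\<^sup>+z. ennreal (Phi ((1/\<xi>) *\<^sub>R z)) \<partial>lborel)"
      by (rule nn_integral_cmult) measurable
    also have "(\<integral>\<^sup>+z. ennreal (Phi ((1/\<xi>) *\<^sub>R z)) \<partial>lborel)
        = ennreal (\<xi> ^ DIM('a)) * (\<integral>\<^sup>+w. ennreal (Phi ((1/\<xi>) *\<^sub>R (\<xi> *\<^sub>R w))) \<partial>lborel)"
      by (rule nn_integral_scale) (use x in auto)
    also have "(\<lambda>w. ennreal (Phi ((1/\<xi>) *\<^sub>R (\<xi> *\<^sub>R w)))) = (\<lambda>w. ennreal (Phi w))"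
      using x by simp
    also have "(\<integral>\<^sup>+w. ennreal (Phi w) \<partial>lborel) \<le> ennreal R" using M by (simp add: Phi_def q_def)
    finally have "(\<integral>\<^sup>+z. ennreal (h z) \<partial>lborel) \<le> ennreal Kb * (ennreal (\<xi> ^ DIM('a)) * ennreal R)"
      by (simp add: mult_left_mono)
    also have "\<dots> = ennreal (Kb * \<xi> ^ DIM('a) * R)" using Kb0 x R by (simp add: ennreal_mult mult.assoc)
    finally show ?thesis .
  qed
  have hint: "integrable lborel h"
  proof (rule integrableI_bounded)
    show "h \<in> borel_measurable lborel" by measurable
    have "(\<integral>\<^sup>+z. ennreal (norm (h z)) \<partial>lborel) = (\<integral>\<^sup>+z. ennreal (h z) \<partial>lborel)"
      using h0 by simp
    also have "\<dots> < \<infinity>"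
    proof -
      have "ennreal (Kb * \<xi> ^ DIM('a) * R) < \<infinity>" by simp
      then show ?thesis by (rule order.strict_trans1[OF hn])
    qed
    finally show "(\<integral>\<^sup>+z. ennreal (norm (h z)) \<partial>lborel) < \<infinity>" .
  qed
  have ih: "integral\<^sup>L lborel h \<le> Kb * \<xi> ^ DIM('a) * R"
  proof -
    have "integral\<^sup>L lborel h = enn2real (\<integral>\<^sup>+z. ennreal (h z) \<partial>lborel)"
      by (rule integral_eq_nn_integral) (use h0 in auto)
    also have "\<dots> \<le> Kb * \<xi> ^ DIM('a) * R" using hn Kb0 x R by (intro enn2real_leI) auto
    finally show ?thesis .
  qed
  have fin: "Kb * \<xi> ^ DIM('a) * R = 4 / \<mu> * \<delta> * Fw \<mu> lam \<xi> * \<xi> powr (-\<alpha>) * R"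
  proof -
    have "\<xi> powr (-q) * \<xi> ^ DIM('a) = \<xi> powr (-\<alpha>)"
      using x by (simp add: q_def powr_realpow[symmetric] powr_add[symmetric])
    then show ?thesis by (simp add: Kb_def mult_ac)
  qed
  have bnd0: "0 \<le> 4 / \<mu> * \<delta> * Fw \<mu> lam \<xi> * \<xi> powr (-\<alpha>) * R" using mu d F0 R by simp
  show ?thesis
  proof (cases "integrable lborel G")
    case True
    have r1: "integral\<^sup>L lborel G = integral\<^sup>L lborel (\<lambda>z. G (- z))" by (rule integral_reflect(1)) measurable
    have r2: "integrable lborel (\<lambda>z. G (- z))" by (rule integral_reflect(2)) (use True in auto)
    have "integral\<^sup>L lborel G = integral\<^sup>L lborel (\<lambda>z. (G z + G (- z)) / 2)"
      using True r1 r2 by (simp add: integral_add)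
    also have "\<dots> \<le> integral\<^sup>L lborel h"
      by (rule integral_mono') (use hint pw h0 in auto)
    also have "\<dots> \<le> Kb * \<xi> ^ DIM('a) * R" by (rule ih)
    finally show ?thesis using lhs fin by simp
  next
    case False
    then have "integral\<^sup>L lborel G = 0" by (rule not_integrable_integral_eq)
    then show ?thesis using lhs bnd0 by simp
  qed
qed

lemma frac_const_nonneg:
  assumes "0 < \<alpha>"
  shows "0 \<le> frac_const d \<alpha>"
proof -
  have "0 < Gamma ((real d + \<alpha>) / 2)" using assms by (intro Gamma_real_pos) simp
  then show ?thesis unfolding frac_const_def by (intro divide_nonneg_nonneg mult_nonneg_nonneg) auto
qed

theorem lemma3p4:
  fixes \<alpha> \<mu> :: real
  assumes "0 < \<alpha>" "\<alpha> < 2" "0 < \<mu>" "\<mu> < min \<alpha> 1"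
  shows "\<exists>C2>0. \<forall>lam>0. \<forall>\<delta>. 0 < \<delta> \<and> \<delta> < 1 \<longrightarrow>
           (\<forall>e\<in>(Basis :: 'a::euclidean_space set). \<forall>\<xi>>0.
              A_pv \<alpha> \<delta> \<mu> lam e \<xi> \<le>
                ereal (if \<xi> \<le> lam then C2 * \<delta> * lam powr (-\<mu>) * \<xi> powr (\<mu> - \<alpha>)
                       else C2 * \<delta> * \<xi> powr (-\<alpha>)))"
proof -
  have mu: "0 < \<mu>" "\<mu> \<le> 1" "\<mu> < \<alpha>" using assms by auto
  obtain R where R: "0 \<le> R"
    and M: "(\<integral>\<^sup>+w. ennreal (phiw \<mu> (norm w) * norm w powr (-(DIM('a) + \<alpha>))) \<partial>(lborel :: 'a measure)) \<le> ennreal R"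
    using M_finite[of \<alpha> \<mu>] assms mu by auto
  define c where "c = frac_const DIM('a) \<alpha>"
  have c0: "0 \<le> c" unfolding c_def using frac_const_nonneg assms by simp
  define C2 where "C2 = c * (4 / \<mu>) * R + 1"
  have "0 \<le> c * (4 / \<mu>) * R" using c0 R mu by simp
  then have C2: "0 < C2" unfolding C2_def by linarith
  have main: "A_pv \<alpha> \<delta> \<mu> lam e \<xi> \<le>
                ereal (if \<xi> \<le> lam then C2 * \<delta> * lam powr (-\<mu>) * \<xi> powr (\<mu> - \<alpha>)
                       else C2 * \<delta> * \<xi> powr (-\<alpha>))"
    if l: "0 < lam" and d: "0 < \<delta>" and e: "e \<in> (Basis :: 'a set)" and x: "0 < \<xi>" for lam \<delta> e \<xi>
  proof -
    define B where "B = 4 / \<mu> * \<delta> * Fw \<mu> lam \<xi> * \<xi> powr (-\<alpha>) * R"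
    have tb: "A_trunc \<alpha> \<delta> \<mu> lam e \<xi> \<epsilon> \<le> c * B" if eps: "0 < \<epsilon>" for \<epsilon>
    proof -
      have "(LINT z : {z::'a. norm z > \<epsilon>} | lborel.
        (omega_mod \<delta> \<mu> lam (norm (\<xi> *\<^sub>R e - z)) - omega_mod \<delta> \<mu> lam \<xi>)
          / norm z powr (real DIM('a) + \<alpha>)) \<le> B"
        unfolding B_def by (rule trunc_bound[OF e assms(1) mu(1,2) l d x eps M R])
      then show ?thesis unfolding A_trunc_def c_def[symmetric] using c0 by (intro mult_left_mono)
    qed
    have "A_pv \<alpha> \<delta> \<mu> lam e \<xi> \<le> ereal (c * B)"
      unfolding A_pv_def
    proof (rule Limsup_bounded)
      show "\<forall>\<^sub>F \<epsilon> in at_right 0. ereal (A_trunc \<alpha> \<delta> \<mu> lam e \<xi> \<epsilon>) \<le> ereal (c * B)"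
        using eventually_at_right_less[of "0::real"] by eventually_elim (use tb in simp)
    qed
    also have "c * B \<le> C2 * \<delta> * Fw \<mu> lam \<xi> * \<xi> powr (-\<alpha>)"
    proof -
      have X0: "0 \<le> \<delta> * Fw \<mu> lam \<xi> * \<xi> powr (-\<alpha>)" using d by (simp add: Fw_def)
      have "c * B = (c * (4 / \<mu>) * R) * (\<delta> * Fw \<mu> lam \<xi> * \<xi> powr (-\<alpha>))"
        by (simp add: B_def mult_ac)
      also have "\<dots> \<le> C2 * (\<delta> * Fw \<mu> lam \<xi> * \<xi> powr (-\<alpha>))"
        using X0 by (intro mult_right_mono) (auto simp: C2_def)
      finally show ?thesis by (simp add: mult_ac)
    qed
    also have "C2 * \<delta> * Fw \<mu> lam \<xi> * \<xi> powr (-\<alpha>) =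
        (if \<xi> \<le> lam then C2 * \<delta> * lam powr (-\<mu>) * \<xi> powr (\<mu> - \<alpha>)
                       else C2 * \<delta> * \<xi> powr (-\<alpha>))"
    proof (cases "\<xi> \<le> lam")
      case True
      have "(\<xi> / lam) powr \<mu> * \<xi> powr (-\<alpha>) = lam powr (-\<mu>) * \<xi> powr (\<mu> - \<alpha>)"
      proof -
        have a: "(\<xi> / lam) powr \<mu> = \<xi> powr \<mu> / lam powr \<mu>" by (rule powr_divide)
        have b: "\<xi> powr (\<mu> - \<alpha>) = \<xi> powr \<mu> * \<xi> powr (-\<alpha>)" by (simp add: powr_add[symmetric])
        have c: "lam powr (-\<mu>) = 1 / lam powr \<mu>" by (simp add: powr_minus_divide)
        show ?thesis unfolding a b c by simp
      qed
      then show ?thesis using True by (simp add: Fw_def mult.assoc)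
    next
      case False
      then show ?thesis by (simp add: Fw_def)
    qed
    finally show ?thesis by simp
  qed
  show ?thesis using C2 main by blast
qed

end
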